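(* Let $g,h\in\mathbb{F}[x]$ and let $\theta:A_h\to A_g$ be an $\mathbb{F}$-algebra isomorphism. Then $\theta(h)=\lambda g$ for some $\lambda\in\mathbb{F}^*$ (here $h\in\mathbb{F}[x]\subseteq A_h$ and $g\in\mathbb{F}[x]\subseteq A_g$).
   Context: $\mathbb{F}$ is an arbitrary field. For $h\in\mathbb{F}[x]$, $A_h$ is the unital associative $\mathbb{F}$-algebra generated by $x,\hat y$ with defining relation $\hat yx-x\hat y=h$; $\mathbb{F}[x]$ is naturally a subalgebra of $A_h$. *)

theory Defs
  imports "HOL-Computational_Algebra.Polynomial"
begin

text \<open>Model of A_h: every element is uniquely sum_i f_i(x) yhat^i with f_i in F[x]
  (Ore extension F[x][yhat; delta_h], delta_h(f) = h * f').  An element is a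
  polynomial in yhat (outer poly) with coefficients in F[x] (inner poly).\<close>

definition hder :: "'a::field poly \<Rightarrow> 'a poly \<Rightarrow> 'a poly" where
  "hder h f = h * pderiv f"

text \<open>Multiplication in A_h, from yhat^i q = sum_k (i choose k) delta^k(q) yhat^(i-k).\<close>
definition amult :: "'a::field poly \<Rightarrow> 'a poly poly \<Rightarrow> 'a poly poly \<Rightarrow> 'a poly poly" where
  "amult h P Q = (\<Sum>i\<le>degree P. \<Sum>j\<le>degree Q. \<Sum>k\<le>i.
      monom (of_nat (i choose k) * coeff P i * ((hder h ^^ k) (coeff Q j))) (i - k + j))"

definition alg_iso :: "'a::field poly \<Rightarrow> 'a poly \<Rightarrow> ('a poly poly \<Rightarrow> 'a poly poly) \<Rightarrow> bool" where
  "alg_iso h g \<theta> \<longleftrightarrow> bij \<theta>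
     \<and> (\<forall>P Q. \<theta> (P + Q) = \<theta> P + \<theta> Q)
     \<and> (\<forall>c P. \<theta> (smult [:c:] P) = smult [:c:] (\<theta> P))
     \<and> (\<forall>P Q. \<theta> (amult h P Q) = amult g (\<theta> P) (\<theta> Q))
     \<and> \<theta> 1 = 1"

end

theory Submission
  imports Defs
begin

lemma smult_sum_right: "smult c (\<Sum>x\<in>S. f x) = (\<Sum>x\<in>S. smult c (f x))"
  by (rule poly_eqI) (simp add: coeff_sum sum_distrib_left)

definition dv :: "'a::field poly \<Rightarrow> 'a poly poly \<Rightarrow> bool" where
  "dv h p \<longleftrightarrow> (\<forall>n. h dvd coeff p n)"

lemma dv_sum: "(\<And>x. x \<in> S \<Longrightarrow> dv h (f x)) \<Longrightarrow> dv h (\<Sum>x\<in>S. f x)"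
  unfolding dv_def by (simp add: coeff_sum dvd_sum)

lemma dv_diff: "dv h p \<Longrightarrow> dv h q \<Longrightarrow> dv h (p - q)"
  unfolding dv_def by simp

lemma dv_zero: "dv h 0" unfolding dv_def by simp

lemma dv_smult: "dv h p \<Longrightarrow> p = smult h (map_poly (\<lambda>c. c div h) p)"
  unfolding dv_def by (intro poly_eqI) (simp add: coeff_map_poly)

lemma hder_pow_dvd: "k > 0 \<Longrightarrow> h dvd (hder h ^^ k) q"
  by (cases k) (auto simp: hder_def)

lemma amult_expand: "amult h P Q = P * Q + (amult h P Q - P * Q)" by simp

lemma PQ_sum: "P * Q = (\<Sum>i\<le>degree P. \<Sum>j\<le>degree Q. monom (coeff P i * coeff Q j) (i + j))"
proof -
  have "P * Q = (\<Sum>i\<le>degree P. monom (coeff P i) i) * (\<Sum>j\<le>degree Q. monom (coeff Q j) j)"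
    by (simp add: poly_as_sum_of_monoms)
  also have "\<dots> = (\<Sum>i\<le>degree P. \<Sum>j\<le>degree Q. monom (coeff P i * coeff Q j) (i + j))"
    by (simp add: sum_product mult_monom)
  finally show ?thesis .
qed

lemma dv_amult_minus: "dv h (amult h P Q - P * Q)"
proof -
  let ?T = "\<lambda>i j k. monom (of_nat (i choose k) * coeff P i * ((hder h ^^ k) (coeff Q j))) (i - k + j)"
  have T0: "?T i j 0 = monom (coeff P i * coeff Q j) (i + j)" for i j by simp
  have "amult h P Q = (\<Sum>i\<le>degree P. \<Sum>j\<le>degree Q. \<Sum>k\<le>i. ?T i j k)"
    unfolding amult_def ..
  moreover have "P * Q = (\<Sum>i\<le>degree P. \<Sum>j\<le>degree Q. \<Sum>k\<le>i. (if k = 0 then ?T i j 0 else 0))"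
    by (subst PQ_sum) (simp only: T0 sum.delta finite_atMost atMost_iff, simp)
  ultimately have "amult h P Q - P * Q = (\<Sum>i\<le>degree P. \<Sum>j\<le>degree Q.
        (\<Sum>k\<le>i. ?T i j k - (if k = 0 then ?T i j 0 else 0)))"
    by (simp only: sum_subtractf)
  also have "dv h \<dots>"
  proof (intro dv_sum)
    fix i j k
    show "dv h (?T i j k - (if k = 0 then ?T i j 0 else 0))"
    proof (cases "k = 0")
      case True then show ?thesis by (simp add: dv_zero)
    next
      case False
      then have "h dvd (hder h ^^ k) (coeff Q j)" by (simp add: hder_pow_dvd)
      then show ?thesis using False unfolding dv_def by auto
    qed
  qed
  finally show ?thesis .
qed

lemma dv_comm: "dv h (amult h P Q - amult h Q P)"
proof -
  have "amult h P Q - amult h Q P = (amult h P Q - P * Q) - (amult h Q P - Q * P)"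
    by (simp add: mult.commute)
  then show ?thesis using dv_diff dv_amult_minus by metis
qed

lemma amult_const_left: "amult h [:c:] v = smult c v"
proof -
  have "amult h [:c:] v = (\<Sum>j\<le>degree v. monom (c * coeff v j) j)"
    unfolding amult_def by simp
  also have "\<dots> = smult c v"
    by (subst (2) poly_as_sum_of_monoms[symmetric]) (simp add: smult_sum_right smult_monom)
  finally show ?thesis .
qed

lemma hder_pow_zero: "(hder h ^^ k) 0 = 0"
  by (induction k) (auto simp: hder_def)

lemma amult_zero_left: "amult h 0 Q = 0"
  unfolding amult_def by simp

lemma amult_smult_left: "amult h (smult c P) Q = smult c (amult h P Q)"
proof (cases "c = 0")
  case True then show ?thesis by (simp add: amult_zero_left)
next
  case False
  then show ?thesis unfolding amult_def
    by (simp add: smult_sum_right smult_monom mult_ac)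
qed

lemma amult_top_coeff:
  "coeff (amult h P Q) (degree P + degree Q) = lead_coeff P * lead_coeff Q"
proof -
  let ?dP = "degree P" and ?dQ = "degree Q"
  have "coeff (amult h P Q) (?dP + ?dQ) = (\<Sum>i\<le>?dP. \<Sum>j\<le>?dQ. \<Sum>k\<le>i.
      (if i = ?dP \<and> j = ?dQ \<and> k = 0 then of_nat (i choose k) * coeff P i * ((hder h ^^ k) (coeff Q j)) else 0))"
    unfolding amult_def coeff_sum coeff_monom
    by (intro sum.cong refl) auto
  also have "\<dots> = (\<Sum>i\<le>?dP. \<Sum>j\<le>?dQ.
      (if i = ?dP \<and> j = ?dQ then coeff P i * coeff Q j else 0))"
    by (intro sum.cong refl) (auto simp: sum.delta)
  also have "\<dots> = (\<Sum>i\<le>?dP. (if i = ?dP then coeff P i * coeff Q ?dQ else 0))"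
    by (intro sum.cong refl) (auto simp: sum.delta)
  also have "\<dots> = lead_coeff P * lead_coeff Q"
    by (simp add: sum.delta)
  finally show ?thesis .
qed

theorem lemma8p1:
  fixes g h :: "'a::field poly" and \<theta> :: "'a poly poly \<Rightarrow> 'a poly poly"
  assumes "alg_iso h g \<theta>"
  shows "\<exists>c::'a. c \<noteq> 0 \<and> \<theta> [:h:] = [:smult c g:]"
proof -
  from assms have bij: "bij \<theta>" and add: "\<And>P Q. \<theta> (P + Q) = \<theta> P + \<theta> Q"
    and mul: "\<And>P Q. \<theta> (amult h P Q) = amult g (\<theta> P) (\<theta> Q)"
    unfolding alg_iso_def by auto
  have diff: "\<theta> (P - Q) = \<theta> P - \<theta> Q" for P Q
    using add[of Q "P - Q"] by (simp add: algebra_simps)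
  define Y :: "'a poly poly" where "Y = monom 1 1"
  define X :: "'a poly poly" where "X = [:[:0, 1:]:]"
  have comm: "amult k Y X - amult k X Y = [:k:]" for k :: "'a poly"
    unfolding amult_def Y_def X_def
    by (simp add: degree_monom_eq hder_def atMost_Suc monom_Suc pderiv_pCons monom_0 one_pCons)
  have th: "\<theta> [:h:] = amult g (\<theta> Y) (\<theta> X) - amult g (\<theta> X) (\<theta> Y)"
    using comm[of h] by (metis diff mul)
  obtain u where u: "\<theta> [:h:] = smult g u"
    using dv_smult[OF dv_comm[of g "\<theta> Y" "\<theta> X"]] th by metis
  show ?thesis
  proof (cases "g = 0")
    case True
    then show ?thesis using u by (intro exI[of _ 1]) simp
  next
    case False
    obtain a b where a: "\<theta> a = Y" and b: "\<theta> b = X"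
      using bij by (metis bij_pointE)
    obtain v where v: "amult h a b - amult h b a = smult h v"
      using dv_smult[OF dv_comm[of h a b]] by metis
    have "[:g:] = \<theta> (amult h a b - amult h b a)"
      using comm[of g] by (simp add: diff mul a b)
    also have "\<dots> = \<theta> (amult h [:h:] v)" by (simp add: v amult_const_left)
    also have "\<dots> = smult g (amult g u (\<theta> v))" by (simp add: mul u amult_smult_left)
    finally have "smult g (amult g u (\<theta> v)) = smult g 1" by simp
    then have "smult g (amult g u (\<theta> v) - 1) = 0" by (simp add: smult_diff_right)
    then have uw: "amult g u (\<theta> v) = 1" using False by simp
    have "u \<noteq> 0" using uw by (auto simp: amult_zero_left)
    have "\<theta> v \<noteq> 0" using uw by (auto simp: amult_def hder_pow_zero)
    have "degree u = 0"
    proof (rule ccontr)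
      assume "degree u \<noteq> 0"
      then have "coeff (amult g u (\<theta> v)) (degree u + degree (\<theta> v)) = 0"
        using uw by simp
      then show False using amult_top_coeff[of g u "\<theta> v"] \<open>u \<noteq> 0\<close> \<open>\<theta> v \<noteq> 0\<close> by simp
    qed
    then obtain u0 where u0: "u = [:u0:]" by (metis degree_eq_zeroE)
    have "coeff (smult u0 (\<theta> v)) 0 = 1"
      using uw by (simp add: u0 amult_const_left)
    then have "u0 dvd 1" by (metis coeff_smult dvdI)
    then obtain c where c: "u0 = [:c:]" "c dvd 1" using is_unit_poly_iff by blast
    then have "c \<noteq> 0" by auto
    moreover have "\<theta> [:h:] = [:smult c g:]"
      using u u0 c by (simp add: mult.commute)
    ultimately show ?thesis by blast
  qed
qed

end
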